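(* Assume Condition 1. For all $t\ge1$, $\bar V_t(\pi^* )\le\theta K$ and $\bar V_t(\pi_t)\le\theta K$.
   Context: Contextual bandit setting: $A$ a set of $K$ actions, $X$ contexts, $\Pi$ a finite set of $N$ policies, $D$ a distribution over $(x,\vec r)\in X\times[0,1]^K$ with marginal $D_X$; $(x_t,\vec r_t)\sim D$ i.i.d., the learner observes $x_t$, picks $a_t$, sees only $r_t:=r_t(a_t)$. $\eta_D(\pi)=\mathbb{E}[r(\pi(x))]$, $\pi^*$ a maximizer. $W_P(x,a)=\sum_{\pi:\pi(x)=a}P(\pi)$. With history $((x_i,a_i,r_i,p_i))_{i\le t}$, $\eta_t(W)=\frac1t\sum_i r_iW(x_i,a_i)/p_i$ for randomized policies $W$, $\pi_t=\arg\max_\pi\eta_t(\pi)$, $\Delta_t(W)=\eta_t(\pi_t)-\eta_t(W)$; $\mathbb{E}_{x\sim h_{t-1}}$ is the average over $x_1,\dots,x_{t-1}$. Actions are chosen by RandomizedUCB$(\Pi,\delta,K)$: $C_t=2\log(Nt/\delta)$, $\mu_t=\min\{\frac1{2K},\sqrt{C_t/(2Kt)}\}$; $P_t$ is a distribution over $\Pi$ whose objective $\sum_\pi P(\pi)\Delta_{t-1}(\pi)$ is within $\epsilon_{\mathrm{opt},t}=O(\sqrt{KC_t/t})$ of the optimum of minimizing it subject to: for all distributions $Q$ over $\Pi$, $\mathbb{E}_{\pi\sim Q}\mathbb{E}_{x\sim h_{t-1}}[1/((1-K\mu_t)W_P(x,\pi(x))+\mu_t)]\le\max\{4K,(t-1)\Delta_{t-1}(W_Q)^2/(180C_{t-1})\}$,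 with each constraint satisfied up to additive slack $K$; $W'_t(a)=(1-K\mu_t)W_{P_t}(x_t,a)+\mu_t$, $a_t\sim W'_t$, $p_t=W'_t(a_t)$. Constants: $\epsilon\in(0,1)$ fixed, $\rho=7500/\epsilon^3$, $\theta=(\rho+1)/(1-(1+\epsilon)/2)$. $t_0$ is the first $t$ with $\mu_t=\sqrt{C_t/(2Kt)}$; $t_1=\lceil16K\log(8KN/\delta)\rceil$. $V_t(\pi)=K$ for $t\le t_0$ and $V_t(\pi)=K+\mathbb{E}_{x\sim D_X}[1/((1-K\mu_t)W_{P_t}(x,\pi(x))+\mu_t)]$ for $t>t_0$; $\bar V_t(\pi)=\max_{\tau\le t}V_\tau(\pi)$. Condition 1: (i) for all $\pi\in\Pi$ and $t\ge t_1$, $\mathbb{E}_{x\sim D_X}[1/((1-K\mu_t)W_{P_t}(x,\pi(x))+\mu_t)]\le(1+\epsilon)\mathbb{E}_{x\sim h_{t-1}}[1/((1-K\mu_t)W_{P_t}(x,\pi(x))+\mu_t)]+\rho K$; and (ii) for all $\pi,\pi'\in\Pi$ and $t\ge t_0$, $|(\eta_t(\pi)-\eta_t(\pi'))-(\eta_D(\pi)-\eta_D(\pi'))|\le2\sqrt{(\bar V_t(\pi)+\bar V_t(\pi'))C_t/t}$. *)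

theory Defs
  imports "HOL-Probability.Probability"
begin

text \<open>Policies are functions from contexts to actions;
  a (randomized) policy W is a function context => action => real.
  The logarithm log is the natural logarithm ln.\<close>

definition Wpol :: "('x \<Rightarrow> 'a) set \<Rightarrow> (('x \<Rightarrow> 'a) \<Rightarrow> real) \<Rightarrow> 'x \<Rightarrow> 'a \<Rightarrow> real" where
  "Wpol Pol P x b = (\<Sum>\<pi>\<in>{\<pi>\<in>Pol. \<pi> x = b}. P \<pi>)"

definition detW :: "('x \<Rightarrow> 'a) \<Rightarrow> 'x \<Rightarrow> 'a \<Rightarrow> real" where
  "detW \<pi> x b = (if \<pi> x = b then 1 else 0)"

definition is_dist :: "('x \<Rightarrow> 'a) set \<Rightarrow> (('x \<Rightarrow> 'a) \<Rightarrow> real) \<Rightarrow> bool" where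
  "is_dist Pol Q \<longleftrightarrow> (\<forall>\<pi>\<in>Pol. 0 \<le> Q \<pi>) \<and> (\<Sum>\<pi>\<in>Pol. Q \<pi>) = 1"

definition Cc :: "nat \<Rightarrow> real \<Rightarrow> nat \<Rightarrow> real" where
  "Cc N \<delta> t = 2 * ln (real N * real t / \<delta>)"

definition mu :: "nat \<Rightarrow> nat \<Rightarrow> real \<Rightarrow> nat \<Rightarrow> real" where
  "mu K N \<delta> t = min (1 / (2 * real K)) (sqrt (Cc N \<delta> t / (2 * real K * real t)))"

definition t0 :: "nat \<Rightarrow> nat \<Rightarrow> real \<Rightarrow> nat" where
  "t0 K N \<delta> = (LEAST t::nat. 1 \<le> t \<and> mu K N \<delta> t = sqrt (Cc N \<delta> t / (2 * real K * real t)))"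

definition t1 :: "nat \<Rightarrow> nat \<Rightarrow> real \<Rightarrow> nat" where
  "t1 K N \<delta> = nat \<lceil>16 * real K * ln (8 * real K * real N / \<delta>)\<rceil>"

definition eta_emp :: "(nat \<Rightarrow> 'x) \<Rightarrow> (nat \<Rightarrow> 'a) \<Rightarrow> (nat \<Rightarrow> real) \<Rightarrow> (nat \<Rightarrow> real)
    \<Rightarrow> nat \<Rightarrow> ('x \<Rightarrow> 'a \<Rightarrow> real) \<Rightarrow> real" where
  "eta_emp x a r p t W = (1 / real t) * (\<Sum>i=1..t. r i * W (x i) (a i) / p i)"

definition emp_avg :: "(nat \<Rightarrow> 'x) \<Rightarrow> nat \<Rightarrow> ('x \<Rightarrow> real) \<Rightarrow> real" where
  "emp_avg x t f = (1 / real t) * (\<Sum>i=1..t. f (x i))"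

definition invW :: "nat \<Rightarrow> real \<Rightarrow> ('x \<Rightarrow> 'a) set \<Rightarrow> (('x \<Rightarrow> 'a) \<Rightarrow> real) \<Rightarrow> ('x \<Rightarrow> 'a) \<Rightarrow> 'x \<Rightarrow> real" where
  "invW K m Pol P \<pi> z = 1 / ((1 - real K * m) * Wpol Pol P z (\<pi> z) + m)"

definition Vt :: "nat \<Rightarrow> nat \<Rightarrow> real \<Rightarrow> ('x \<Rightarrow> 'a) set \<Rightarrow> (nat \<Rightarrow> ('x \<Rightarrow> 'a) \<Rightarrow> real)
    \<Rightarrow> 'x measure \<Rightarrow> nat \<Rightarrow> ('x \<Rightarrow> 'a) \<Rightarrow> real" where
  "Vt K N \<delta> Pol P DX t \<pi> =
     (if t \<le> t0 K N \<delta> then real K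
      else real K + (\<integral>z. invW K (mu K N \<delta> t) Pol (P t) \<pi> z \<partial>DX))"

definition Vbar :: "nat \<Rightarrow> nat \<Rightarrow> real \<Rightarrow> ('x \<Rightarrow> 'a) set \<Rightarrow> (nat \<Rightarrow> ('x \<Rightarrow> 'a) \<Rightarrow> real)
    \<Rightarrow> 'x measure \<Rightarrow> nat \<Rightarrow> ('x \<Rightarrow> 'a) \<Rightarrow> real" where
  "Vbar K N \<delta> Pol P DX t \<pi> = Max ((\<lambda>\<tau>. Vt K N \<delta> Pol P DX \<tau> \<pi>) ` {1..t})"

end

theory Submission
  imports Defs
begin



lemma int_le_const_prob:
  fixes f :: "'b \<Rightarrow> real"
  assumes "prob_space M" "\<And>z. z \<in> space M \<Longrightarrow> f z \<le> B" "0 \<le> B"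
  shows "integral\<^sup>L M f \<le> B"
proof (cases "integrable M f")
  case True
  interpret prob_space M by fact
  have "integral\<^sup>L M f \<le> integral\<^sup>L M (\<lambda>_. B)"
    by (rule integral_mono[OF True]) (auto simp: assms(2))
  also have "\<dots> = B" by (simp add: prob_space)
  finally show ?thesis .
next
  case False then show ?thesis using assms by (simp add: not_integrable_integral_eq)
qed

lemma int_nonneg_gen:
  assumes "\<And>z. z \<in> space M \<Longrightarrow> 0 \<le> (f z::real)"
  shows "0 \<le> integral\<^sup>L M f"
  by (rule integral_nonneg_AE) (use assms in auto)

lemma sq_bound2:
  fixes d A B c s :: real
  assumes "0 \<le> d" "d \<le> 2* sqrt(A*c/s) + 2* sqrt(B*c/s)" "0 \<le> A" "0 \<le> B" "0 < c" "0 < s"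
  shows "s * d\<^sup>2 / (180 * c) \<le> 2*(A+B)/45"
proof -
  define u where "u = sqrt(A*c/s)"
  define v where "v = sqrt(B*c/s)"
  have u2: "u\<^sup>2 = A*c/s" unfolding u_def using assms by simp
  have v2: "v\<^sup>2 = B*c/s" unfolding v_def using assms by simp
  have "d\<^sup>2 \<le> (2 * u + 2 * v)\<^sup>2" using assms(1,2) unfolding u_def v_def
    by (intro power_mono) auto
  also have "\<dots> \<le> 8*(u\<^sup>2 + v\<^sup>2)"
  proof -
    have "0 \<le> (u - v)\<^sup>2" by simp
    thus ?thesis by (simp add: power2_eq_square algebra_simps)
  qed
  finally have "d\<^sup>2 \<le> 8*(A+B)*c/s" using u2 v2 by (simp add: algebra_simps add_divide_distrib)
  hence "s * d\<^sup>2 \<le> 8*(A+B)*c" using assms by (simp add: field_simps)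
  thus ?thesis using assms by (simp add: field_simps)
qed

lemma arith_star:
  fixes \<epsilon> \<rho> \<theta> K X :: real
  assumes "0 < \<epsilon>" "\<epsilon> < 1" "0 \<le> \<rho>" "\<theta> = (\<rho> + 1) / (1 - (1 + \<epsilon>) / 2)" "\<theta> \<ge> 100" "0 \<le> K"
    "X \<le> 4*\<theta>*K/45"
  shows "K + (1+\<epsilon>)*(max (4*K) X + K) + \<rho>*K \<le> \<theta>*K"
proof -
  have e: "\<rho> + 1 = \<theta> * ((1-\<epsilon>)/2)" using assms(2,4) by (simp add: field_simps)
  have tk: "\<theta>*K \<ge> 100*K" using assms(5,6) by (simp add: mult_right_mono)
  have "max (4*K) X \<le> \<theta>*K/2 - K" using tk assms(6,7) by (auto simp: max_def)
  hence "(1+\<epsilon>)*(max (4*K) X + K) \<le> (1+\<epsilon>)*(\<theta>*K/2)" using assms(1) by (intro mult_left_mono) auto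
  moreover have "K + \<rho>*K = \<theta>*K*((1-\<epsilon>)/2)" using e by (metis distrib_right mult.commute mult.left_commute mult_1 add.commute)
  ultimately show ?thesis by (simp add: algebra_simps)
qed

lemma arith_pit:
  fixes \<epsilon> \<rho> \<theta> K M :: real
  assumes "0 < \<epsilon>" "\<epsilon> < 1" "0 \<le> \<rho>" "\<theta> = (\<rho> + 1) / (1 - (1 + \<epsilon>) / 2)" "\<theta> \<ge> 100" "0 \<le> K"
    "M \<le> max (\<theta>*K) (K + (1+\<epsilon>)*(max (4*K) (4*(\<theta>*K+M)/45) + K) + \<rho>*K)"
  shows "M \<le> \<theta>*K"
proof (rule ccontr)
  assume c: "\<not> M \<le> \<theta>*K"
  have e: "\<rho> + 1 = \<theta> * ((1-\<epsilon>)/2)" using assms(2,4) by (simp add: field_simps)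
  have tk: "\<theta>*K \<ge> 100*K" using assms(5,6) by (simp add: mult_right_mono)
  have m1: "M \<le> K + (1+\<epsilon>)*(max (4*K) (4*(\<theta>*K+M)/45) + K) + \<rho>*K" using c assms(7) by auto
  have "max (4*K) (4*(\<theta>*K+M)/45) \<le> 8*M/45" using c tk assms(6) by (auto simp: max_def)
  hence "(1+\<epsilon>)*(max (4*K) (4*(\<theta>*K+M)/45) + K) \<le> (1+\<epsilon>)*(8*M/45 + K)"
    using assms(1) by (intro mult_left_mono) auto
  with m1 have m: "M \<le> K + (1+\<epsilon>)*(8*M/45 + K) + \<rho>*K" by simp
  have kr: "K + \<rho>*K = \<theta>*K*((1-\<epsilon>)/2)" using e by (metis distrib_right mult.commute mult.left_commute mult_1 add.commute)
  have "K \<le> M/100" using c tk by simp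
  hence "(1+\<epsilon>)*(8*M/45 + K) \<le> (1+\<epsilon>)*(8*M/45 + M/100)" using assms(1) by (intro mult_left_mono) auto
  with m kr have m2: "M \<le> \<theta>*K*((1-\<epsilon>)/2) + (1+\<epsilon>)*(8*M/45 + M/100)" by simp
  moreover have "\<theta>*K*((1-\<epsilon>)/2) < M*((1-\<epsilon>)/2)" using c assms(2) by (intro mult_strict_right_mono) auto
  ultimately have "M < M*((1-\<epsilon>)/2) + (1+\<epsilon>)*(8*M/45 + M/100)" by simp
  moreover have "M \<ge> 0" using c tk assms(6) by linarith
  moreover have "M*((1-\<epsilon>)/2) + (1+\<epsilon>)*(8*M/45 + M/100) = M * ((1-\<epsilon>)/2 + (1+\<epsilon>)*(8/45+1/100))"
    by (simp add: algebra_simps)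
  moreover have "(1-\<epsilon>)/2 + (1+\<epsilon>)*(8/45+1/100) \<le> (1::real)" using assms(1,2) by (simp add: field_simps)
  ultimately show False
    using mult_left_mono[of "(1-\<epsilon>)/2 + (1+\<epsilon>)*(8/45+1/100)" 1 M] by linarith
qed



lemma ln_le_2sqrt: "0 < (y::real) \<Longrightarrow> ln y \<le> 2 * sqrt y"
proof -
  assume y: "0 < y"
  have "ln y = 2 * ln (sqrt y)" using y by (simp add: ln_sqrt)
  also have "ln (sqrt y) \<le> sqrt y - 1" using y by (intro ln_le_minus_one) auto
  hence "2 * ln (sqrt y) \<le> 2 * sqrt y" by simp
  finally show ?thesis .
qed

lemma Cc_pos: "1 \<le> N \<Longrightarrow> 0 < \<delta> \<Longrightarrow> \<delta> < 1 \<Longrightarrow> 1 \<le> t \<Longrightarrow> 0 < Cc N \<delta> t"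
proof -
  assume a: "1 \<le> N" "0 < \<delta>" "\<delta> < 1" "1 \<le> t"
  have "1 * 1 \<le> real N * real t" using a by (intro mult_mono) auto
  hence "1 < real N * real t / \<delta>" using a by (simp add: field_simps)
  thus ?thesis unfolding Cc_def by simp
qed

lemma mu_pos: "1 \<le> K \<Longrightarrow> 1 \<le> N \<Longrightarrow> 0 < \<delta> \<Longrightarrow> \<delta> < 1 \<Longrightarrow> 1 \<le> t \<Longrightarrow>
   0 < mu K N \<delta> t \<and> mu K N \<delta> t \<le> 1 / (2 * real K)"
  using Cc_pos[of N \<delta> t] unfolding mu_def by auto

lemma t0_ge1:
  assumes "1 \<le> K" "1 \<le> N" "0 < \<delta>" "\<delta> < 1"
  shows "1 \<le> t0 K N \<delta>"
proof -
  define t :: nat where "t = nat \<lceil>64 * real K^2 * real N / \<delta>\<rceil> + 1"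
  have t1: "1 \<le> t" unfolding t_def by simp
  have tb: "64 * real K^2 * real N / \<delta> \<le> real t" unfolding t_def
    using real_nat_ceiling_ge[of "64 * real K^2 * real N / \<delta>"] by simp
  have pos: "0 < real N * real t / \<delta>" using assms t1 by simp
  have "ln (real N * real t / \<delta>) \<le> 2 * sqrt (real N * real t / \<delta>)" by (rule ln_le_2sqrt[OF pos])
  moreover have "8 * real K * sqrt (real N * real t / \<delta>) \<le> real t"
  proof -
    have "(8 * real K * sqrt (real N * real t / \<delta>))^2 = 64 * real K^2 * real N / \<delta> * real t"
      using pos by (simp add: power_mult_distrib)
    also have "\<dots> \<le> real t * real t" using tb t1 by (intro mult_right_mono) auto
    finally have "(8 * real K * sqrt (real N * real t / \<delta>))^2 \<le> (real t)^2" by (simp add: power2_eq_square)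
    thus ?thesis by (rule power2_le_imp_le) simp
  qed
  moreover have "4 * real K * ln (real N * real t / \<delta>) \<le> 4 * real K * (2 * sqrt (real N * real t / \<delta>))"
    by (rule mult_left_mono) (use calculation in simp_all)
  ultimately have h: "4 * real K * ln (real N * real t / \<delta>) \<le> real t"
    by (simp add: mult.assoc)
  have Kp: "0 < real K" using assms by simp
  have "Cc N \<delta> t / (2 * real K * real t) \<le> (1 / (2 * real K))^2"
  proof -
    have "Cc N \<delta> t * (4 * real K * real K) \<le> 1 * (2 * real K * real t)"
      using h Kp unfolding Cc_def by (simp add: algebra_simps)
    thus ?thesis using Kp t1 by (simp add: divide_simps power2_eq_square)
  qed
  hence "sqrt (Cc N \<delta> t / (2 * real K * real t)) \<le> 1 / (2 * real K)"
    using assms real_sqrt_le_mono real_sqrt_abs[of "1 / (2 * real K)"] by fastforce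
  hence P: "1 \<le> t \<and> mu K N \<delta> t = sqrt (Cc N \<delta> t / (2 * real K * real t))" using t1 unfolding mu_def by auto
  show ?thesis unfolding t0_def using LeastI[of "\<lambda>t. 1 \<le> t \<and> mu K N \<delta> t = sqrt (Cc N \<delta> t / (2 * real K * real t))", OF P] by blast
qed

lemma Cc_mono:
  assumes "1 \<le> N" "0 < \<delta>" "1 \<le> s" "s \<le> t" "1 \<le> ln (real N * real s / \<delta>)"
  shows "Cc N \<delta> t / real t \<le> Cc N \<delta> s / real s"
proof -
  define L where "L = ln (real N * real s / \<delta>)"
  have sp: "0 < real s" "0 < real t" using assms by auto
  have "ln (real N * real t / \<delta>) = L + ln (real t / real s)"
  proof -
    have eqn: "real N * real t / \<delta> = (real t / real s) * (real N * real s / \<delta>)" using sp by (simp add: field_simps)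
    have p: "0 < real t / real s" "0 < real N * real s / \<delta>" using sp assms by auto
    have "ln (real N * real t / \<delta>) = ln ((real t / real s) * (real N * real s / \<delta>))" using eqn by (rule arg_cong)
    also have "\<dots> = ln (real t / real s) + ln (real N * real s / \<delta>)" by (rule ln_mult_pos[OF p])
    finally show ?thesis unfolding L_def by simp
  qed
  also have "ln (real t / real s) \<le> real t / real s - 1" using sp by (intro ln_le_minus_one) auto
  finally have a: "ln (real N * real t / \<delta>) \<le> L + real t / real s - 1" by simp
  have "(L + real t / real s - 1) * real s \<le> L * real t"
  proof -
    have "(L + real t / real s - 1) * real s = L * real s + real t - real s" using sp by (simp add: field_simps)
    also have "\<dots> \<le> L * real t"
    proof -
      have "1 * (real t - real s) \<le> L * (real t - real s)" using assms(4,5) L_def by (intro mult_right_mono) auto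
      thus ?thesis by (simp add: algebra_simps)
    qed
    finally show ?thesis .
  qed
  moreover have "ln (real N * real t / \<delta>) * real s \<le> (L + real t / real s - 1) * real s" using a sp by (intro mult_right_mono) auto
  ultimately have "ln (real N * real t / \<delta>) * real s \<le> L * real t" by linarith
  thus ?thesis unfolding Cc_def L_def[symmetric] using sp by (simp add: field_simps)
qed

lemma mu_crude:
  assumes K: "1 \<le> K" and N: "1 \<le> N" and d: "0 < \<delta>" "\<delta> < 1" and t2: "2 \<le> t"
    and tl: "real t < 16 * real K * ln (8 * real K * real N / \<delta>) + 1"
  shows "1 / (6 * real K) \<le> mu K N \<delta> t"
proof -
  define L where "L = ln (real N / \<delta>)"
  have Kp: "1 \<le> real K" using K by simp
  have L0: "0 < L" unfolding L_def using N d by (simp add: field_simps)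
  have e1: "ln (8 * real K * real N / \<delta>) = ln (8 * real K) + L" unfolding L_def
    using Kp N d ln_mult[of "8 * real K" "real N / \<delta>"] by (simp add: mult.assoc)
  have e2: "ln (real N * real t / \<delta>) = ln (real t) + L" unfolding L_def
    using t2 N d ln_mult[of "real t" "real N / \<delta>"] by (simp add: mult.commute)
  have ln2: "ln (2::real) \<ge> 1/2" using ln2_ge_two_thirds by simp
  have ln8: "2 \<le> ln (8::real)"
  proof -
    have "ln (8::real) = 3 * ln 2" using ln_realpow[of 2 3] by simp
    thus ?thesis using ln2_ge_two_thirds by simp
  qed
  have lt0: "ln (2::real) \<le> ln (real t)" using t2 by simp
  have l8K: "ln 8 \<le> ln (8 * real K)" using Kp by simp
  have key: "real t \<le> 36 * real K * (ln (real t) + L)"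
  proof (cases "ln (8 * real K) \<le> L")
    case True
    have "16 * real K * (ln (8 * real K) + L) \<le> 16 * real K * (2 * L)" using True Kp by (intro mult_left_mono) auto
    moreover have "real t < 16 * real K * (ln (8 * real K) + L) + 1" using tl e1 by simp
    ultimately have "real t < 32 * real K * L + 1" by linarith
    moreover have "1 \<le> 4 * real K * L"
    proof -
      have "2 \<le> L" using True ln8 l8K by linarith
      hence "1 * 2 \<le> real K * L" using Kp by (intro mult_mono) auto
      thus ?thesis by simp
    qed
    moreover have "0 \<le> 36 * real K * ln (real t)" using t2 by simp
    ultimately show ?thesis by (simp add: algebra_simps)
  next
    case False
    have "16 * real K * (ln (8 * real K) + L) \<le> 16 * real K * (2 * ln (8 * real K))" using False Kp by (intro mult_left_mono) auto
    moreover have "real t < 16 * real K * (ln (8 * real K) + L) + 1" using tl e1 by simp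
    ultimately have tlt: "real t < 32 * real K * ln (8 * real K) + 1" by linarith
    show ?thesis
    proof (cases "real t \<le> 8 * real K")
      case True
      have "real K * (1/2) \<le> real K * ln (real t)" using ln2 lt0 Kp by (intro mult_left_mono) auto
      hence "8 * real K \<le> 36 * real K * ln (real t)" by linarith
      moreover have "0 \<le> 36 * real K * L" using L0 Kp by simp
      ultimately show ?thesis using True by (simp add: algebra_simps)
    next
      case f2: False
      have "ln (8 * real K) \<le> ln (real t)" using f2 Kp by simp
      hence "36 * real K * ln (8 * real K) \<le> 36 * real K * ln (real t)" using Kp by simp
      moreover have "1 \<le> 4 * real K * ln (8 * real K)"
      proof -
        have "2 \<le> ln (8 * real K)" using ln8 l8K by linarith
        hence "1 * 2 \<le> real K * ln (8 * real K)" using Kp by (intro mult_mono) auto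
        thus ?thesis by simp
      qed
      moreover have "0 \<le> 36 * real K * L" using L0 Kp by simp
      ultimately show ?thesis using tlt by (simp add: algebra_simps)
    qed
  qed
  have Cpos: "0 < Cc N \<delta> t" using Cc_pos[of N \<delta> t] N d t2 by simp
  have "(1 / (6 * real K))^2 \<le> Cc N \<delta> t / (2 * real K * real t)"
    using key Kp t2 unfolding Cc_def e2 by (simp add: field_simps power2_eq_square)
  hence "1 / (6 * real K) \<le> sqrt (Cc N \<delta> t / (2 * real K * real t))"
    using Kp by (simp add: real_le_rsqrt)
  moreover have "1 / (6 * real K) \<le> 1 / (2 * real K)" using Kp by (simp add: field_simps)
  ultimately show ?thesis unfolding mu_def by simp
qed



lemma t1_lt:
  assumes "\<tau> < t1 K N \<delta>" shows "real \<tau> < 16 * real K * ln (8 * real K * real N / \<delta>)"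
proof -
  define y where "y = 16 * real K * ln (8 * real K * real N / \<delta>)"
  have "\<tau> < nat \<lceil>y\<rceil>" using assms unfolding t1_def y_def by simp
  hence "int \<tau> < \<lceil>y\<rceil>" by linarith
  hence "of_int (int \<tau>) < y" by (simp only: less_ceiling_iff)
  thus ?thesis unfolding y_def by simp
qed

lemma t1_ge:
  assumes "t1 K N \<delta> \<le> \<tau>" shows "16 * real K * ln (8 * real K * real N / \<delta>) \<le> real \<tau>"
proof -
  define y where "y = 16 * real K * ln (8 * real K * real N / \<delta>)"
  have "nat \<lceil>y\<rceil> \<le> \<tau>" using assms unfolding t1_def y_def by simp
  hence "\<lceil>y\<rceil> \<le> int \<tau>" by linarith
  hence "y \<le> of_int (int \<tau>)" by (simp only: ceiling_le_iff)
  thus ?thesis unfolding y_def by simp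
qed

lemma t1_big:
  assumes "1 \<le> K" "1 \<le> N" "0 < \<delta>" "\<delta> < 1"
  shows "32 \<le> 16 * real K * ln (8 * real K * real N / \<delta>)"
proof -
  have ln8: "2 \<le> ln (8::real)"
  proof -
    have "ln (8::real) = 3 * ln 2" using ln_realpow[of 2 3] by simp
    thus ?thesis using ln2_ge_two_thirds by simp
  qed
  have "8 * 1 * 1 \<le> 8 * real K * real N" using assms by (intro mult_mono) auto
  hence "8 \<le> 8 * real K * real N / \<delta>" using assms by (simp add: field_simps)
  hence "ln 8 \<le> ln (8 * real K * real N / \<delta>)" by simp
  hence "2 \<le> ln (8 * real K * real N / \<delta>)" using ln8 by linarith
  hence "16 * 1 * 2 \<le> 16 * real K * ln (8 * real K * real N / \<delta>)" using assms by (intro mult_mono) auto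
  thus ?thesis by simp
qed

lemma ln3: "1 \<le> ln (3::real)"
proof -
  have "exp 1 \<le> (3::real)" using e_less_272 by simp
  hence "ln (exp 1) \<le> ln (3::real)" by (subst ln_le_cancel_iff) auto
  thus ?thesis by simp
qed



theorem lemma13:
  fixes D :: "('x \<times> ('a::finite \<Rightarrow> real)) measure"
    and MX :: "'x measure"
    and Pol :: "('x \<Rightarrow> 'a) set"
    and \<delta> \<epsilon> c :: real
    and x :: "nat \<Rightarrow> 'x" and a :: "nat \<Rightarrow> 'a"
    and rv :: "nat \<Rightarrow> 'a \<Rightarrow> real" and r p :: "nat \<Rightarrow> real"
    and P :: "nat \<Rightarrow> ('x \<Rightarrow> 'a) \<Rightarrow> real"
    and pit :: "nat \<Rightarrow> ('x \<Rightarrow> 'a)"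
    and pistar :: "'x \<Rightarrow> 'a"
  defines "K \<equiv> CARD('a)"
    and "N \<equiv> card Pol"
    and "DX \<equiv> distr D MX fst"
    and "\<rho> \<equiv> 7500 / \<epsilon> ^ 3"
    and "\<theta> \<equiv> (7500 / \<epsilon> ^ 3 + 1) / (1 - (1 + \<epsilon>) / 2)"
    and "etaD \<equiv> (\<lambda>\<pi>. \<integral>z. snd z (\<pi> (fst z)) \<partial>D)"
    and "\<eta> \<equiv> eta_emp x a r p"
    and "\<Delta> \<equiv> (\<lambda>t W. eta_emp x a r p t (detW (pit t)) - eta_emp x a r p t W)"
    and "C \<equiv> Cc (card Pol) \<delta>"
    and "\<mu> \<equiv> mu CARD('a) (card Pol) \<delta>"
    and "V \<equiv> Vbar CARD('a) (card Pol) \<delta> Pol P (distr D MX fst)"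
  assumes D_prob: "prob_space D"
    and fst_meas: "fst \<in> D \<rightarrow>\<^sub>M MX"
    and pol_meas: "\<forall>\<pi>\<in>Pol. \<pi> \<in> MX \<rightarrow>\<^sub>M count_space UNIV"
    and rew_meas: "\<forall>\<pi>\<in>Pol. (\<lambda>z. snd z (\<pi> (fst z))) \<in> borel_measurable D"
    and rew_range: "AE z in D. \<forall>b. 0 \<le> snd z b \<and> snd z b \<le> 1"
    and Pi_fin: "finite Pol" and Pi_ne: "Pol \<noteq> {}"
    and delta: "0 < \<delta>" "\<delta> < 1"
    and eps: "0 < \<epsilon>" "\<epsilon> < 1"
    and hist_x: "\<forall>t\<ge>1. x t \<in> space MX"
    and hist_rv: "\<forall>t\<ge>1. \<forall>b. 0 \<le> rv t b \<and> rv t b \<le> 1"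
    and hist_r: "\<forall>t\<ge>1. r t = rv t (a t)"
    and pit_max: "\<forall>t. pit t \<in> Pol \<and> (\<forall>\<pi>\<in>Pol. \<eta> t (detW \<pi>) \<le> \<eta> t (detW (pit t)))"
    and pistar_max: "pistar \<in> Pol \<and> (\<forall>\<pi>\<in>Pol. etaD \<pi> \<le> etaD pistar)"
    and P_dist: "\<forall>t\<ge>1. is_dist Pol (P t)"
    and P_constr: "\<forall>t\<ge>1. \<forall>Q. is_dist Pol Q \<longrightarrow>
        (\<Sum>\<pi>\<in>Pol. Q \<pi> * emp_avg x (t - 1) (invW K (\<mu> t) Pol (P t) \<pi>))
          \<le> max (4 * real K) (real (t - 1) * (\<Delta> (t - 1) (Wpol Pol Q))\<^sup>2 / (180 * C (t - 1)))
             + real K"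
    and P_nearopt: "\<forall>t\<ge>1. \<forall>P'. is_dist Pol P' \<and>
        (\<forall>Q. is_dist Pol Q \<longrightarrow>
          (\<Sum>\<pi>\<in>Pol. Q \<pi> * emp_avg x (t - 1) (invW K (\<mu> t) Pol P' \<pi>))
            \<le> max (4 * real K) (real (t - 1) * (\<Delta> (t - 1) (Wpol Pol Q))\<^sup>2 / (180 * C (t - 1))))
        \<longrightarrow> (\<Sum>\<pi>\<in>Pol. P t \<pi> * \<Delta> (t - 1) (detW \<pi>))
              \<le> (\<Sum>\<pi>\<in>Pol. P' \<pi> * \<Delta> (t - 1) (detW \<pi>)) + c * sqrt (real K * C t / real t)"
    and hist_p: "\<forall>t\<ge>1. p t = (1 - real K * \<mu> t) * Wpol Pol (P t) (x t) (a t) + \<mu> t"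
    and cond1_i: "\<forall>\<pi>\<in>Pol. \<forall>t\<ge>t1 K N \<delta>.
        (\<integral>z. invW K (\<mu> t) Pol (P t) \<pi> z \<partial>DX)
          \<le> (1 + \<epsilon>) * emp_avg x (t - 1) (invW K (\<mu> t) Pol (P t) \<pi>) + \<rho> * real K"
    and cond1_ii: "\<forall>\<pi>\<in>Pol. \<forall>\<pi>'\<in>Pol. \<forall>t\<ge>t0 K N \<delta>.
        \<bar>(\<eta> t (detW \<pi>) - \<eta> t (detW \<pi>')) - (etaD \<pi> - etaD \<pi>')\<bar>
          \<le> 2 * sqrt ((V t \<pi> + V t \<pi>') * C t / real t)"
  shows "\<forall>t\<ge>1. V t pistar \<le> \<theta> * real K \<and> V t (pit t) \<le> \<theta> * real K"
proof -
  have Kge: "1 \<le> K" unfolding K_def using finite_UNIV_card_ge_0[where 'a='a] by simp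
  have Kr: "1 \<le> real K" using Kge by simp
  have Nge: "1 \<le> N" using Pi_fin Pi_ne by (simp add: N_def card_gt_0_iff Suc_le_eq)
  have muE: "\<mu> = mu K N \<delta>" by (simp add: \<mu>_def K_def N_def)
  have CE: "C = Cc N \<delta>" by (simp add: C_def N_def)
  have VE: "V = Vbar K N \<delta> Pol P DX" by (simp add: V_def K_def N_def DX_def)
  have DXp: "prob_space DX" unfolding DX_def by (rule prob_space.prob_space_distr[OF D_prob fst_meas])
  have t0ge: "1 \<le> t0 K N \<delta>" by (rule t0_ge1) (use Kge Nge delta in auto)
  have mupos: "\<And>\<tau>. 1 \<le> \<tau> \<Longrightarrow> 0 < \<mu> \<tau> \<and> \<mu> \<tau> \<le> 1 / (2 * real K)"
    unfolding muE using mu_pos Kge Nge delta by blast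
  have Cpos: "\<And>\<tau>. 1 \<le> \<tau> \<Longrightarrow> 0 < C \<tau>" unfolding CE using Cc_pos Nge delta by blast
  have Pnn: "\<And>\<tau> \<sigma>. 1 \<le> \<tau> \<Longrightarrow> \<sigma> \<in> Pol \<Longrightarrow> 0 \<le> P \<tau> \<sigma>" using P_dist unfolding is_dist_def by blast
  have Wnn: "\<And>\<tau> z b. 1 \<le> \<tau> \<Longrightarrow> 0 \<le> Wpol Pol (P \<tau>) z b"
    unfolding Wpol_def by (rule sum_nonneg) (use Pnn in auto)
  have invb: "\<And>\<tau> \<pi> z. 1 \<le> \<tau> \<Longrightarrow> 0 \<le> invW K (\<mu> \<tau>) Pol (P \<tau>) \<pi> z \<and> invW K (\<mu> \<tau>) Pol (P \<tau>) \<pi> z \<le> 1 / \<mu> \<tau>"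
  proof -
    fix \<tau> \<pi> z assume t: "1 \<le> (\<tau>::nat)"
    have m: "0 < \<mu> \<tau>" "\<mu> \<tau> \<le> 1 / (2 * real K)" using mupos[OF t] by auto
    have "real K * \<mu> \<tau> \<le> real K * (1 / (2 * real K))" using m Kr by (intro mult_left_mono) auto
    hence km: "0 \<le> 1 - real K * \<mu> \<tau>" using Kr by simp
    have "0 \<le> (1 - real K * \<mu> \<tau>) * Wpol Pol (P \<tau>) z (\<pi> z)" using km Wnn[OF t] by simp
    hence d: "\<mu> \<tau> \<le> (1 - real K * \<mu> \<tau>) * Wpol Pol (P \<tau>) z (\<pi> z) + \<mu> \<tau>" by simp
    show "0 \<le> invW K (\<mu> \<tau>) Pol (P \<tau>) \<pi> z \<and> invW K (\<mu> \<tau>) Pol (P \<tau>) \<pi> z \<le> 1 / \<mu> \<tau>"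
      unfolding invW_def using d m by (auto intro: divide_left_mono)
  qed
  have intb: "\<And>\<tau> \<pi>. 1 \<le> \<tau> \<Longrightarrow> 0 \<le> (\<integral>z. invW K (\<mu> \<tau>) Pol (P \<tau>) \<pi> z \<partial>DX) \<and> (\<integral>z. invW K (\<mu> \<tau>) Pol (P \<tau>) \<pi> z \<partial>DX) \<le> 1 / \<mu> \<tau>"
  proof -
    fix \<tau> \<pi> assume t: "1 \<le> (\<tau>::nat)"
    show "0 \<le> (\<integral>z. invW K (\<mu> \<tau>) Pol (P \<tau>) \<pi> z \<partial>DX) \<and> (\<integral>z. invW K (\<mu> \<tau>) Pol (P \<tau>) \<pi> z \<partial>DX) \<le> 1 / \<mu> \<tau>"
      using int_nonneg_gen[of DX "invW K (\<mu> \<tau>) Pol (P \<tau>) \<pi>"] int_le_const_prob[OF DXp, of "invW K (\<mu> \<tau>) Pol (P \<tau>) \<pi>" "1 / \<mu> \<tau>"]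
        invb[OF t] mupos[OF t] by auto
  qed
  define W where "W = Vt K N \<delta> Pol P DX"
  have W_eq: "\<And>\<tau> \<pi>. W \<tau> \<pi> = (if \<tau> \<le> t0 K N \<delta> then real K else real K + (\<integral>z. invW K (\<mu> \<tau>) Pol (P \<tau>) \<pi> z \<partial>DX))"
    by (simp add: W_def Vt_def muE)
  have Wnn: "\<And>\<tau> \<pi>. 1 \<le> \<tau> \<Longrightarrow> 0 \<le> W \<tau> \<pi>" using W_eq intb by simp
  have V_eq: "\<And>t \<pi>. V t \<pi> = Max ((\<lambda>\<tau>. W \<tau> \<pi>) ` {1..t})" by (simp add: VE Vbar_def W_def)
  have Vge: "\<And>t \<pi> \<tau>. \<tau> \<in> {1..t} \<Longrightarrow> W \<tau> \<pi> \<le> V t \<pi>" unfolding V_eq by (rule Max_ge) auto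
  have Vle: "\<And>t \<pi> B. 1 \<le> t \<Longrightarrow> (\<And>\<tau>. \<tau> \<in> {1..t} \<Longrightarrow> W \<tau> \<pi> \<le> B) \<Longrightarrow> V t \<pi> \<le> B"
    unfolding V_eq by (subst Max_le_iff) auto
  have Vnn: "\<And>t \<pi>. 1 \<le> t \<Longrightarrow> 0 \<le> V t \<pi>" using Vge Wnn by (meson atLeastAtMost_iff order_refl order_trans)
  have Vmono: "\<And>s t \<pi>. 1 \<le> s \<Longrightarrow> s \<le> t \<Longrightarrow> V s \<pi> \<le> V t \<pi>"
    using Vle Vge by (meson atLeastAtMost_iff order_trans)
  have rho0: "0 \<le> \<rho>" unfolding \<rho>_def using eps by simp
  have th: "\<theta> = (\<rho> + 1) / (1 - (1 + \<epsilon>) / 2)" unfolding \<theta>_def \<rho>_def ..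
  have th100: "100 \<le> \<theta>"
  proof -
    have "\<epsilon> ^ 3 \<le> 1" using eps by (simp add: power_le_one)
    hence "7500 \<le> \<rho>" unfolding \<rho>_def using eps by (simp add: field_simps)
    moreover have "0 < 1 - (1 + \<epsilon>) / 2" "1 - (1 + \<epsilon>) / 2 \<le> 1" using eps by auto
    ultimately have "(\<rho> + 1) / 1 \<le> \<theta>" unfolding th using rho0 by (intro divide_left_mono) auto
    hence "\<rho> + 1 \<le> \<theta>" by simp
    thus ?thesis using \<open>7500 \<le> \<rho>\<close> by simp
  qed
  have thK: "real K \<le> \<theta> * real K" using th100 Kr by simp
  have crude: "\<And>\<tau> \<pi>. 1 \<le> \<tau> \<Longrightarrow> t0 K N \<delta> < \<tau> \<Longrightarrow> \<tau> < t1 K N \<delta> \<Longrightarrow> W \<tau> \<pi> \<le> \<theta> * real K"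
  proof -
    fix \<tau> \<pi> assume a: "1 \<le> (\<tau>::nat)" "t0 K N \<delta> < \<tau>" "\<tau> < t1 K N \<delta>"
    have a2: "2 \<le> \<tau>" using a(2) t0ge by linarith
    have tl: "real \<tau> < 16 * real K * ln (8 * real K * real N / \<delta>) + 1" using t1_lt[OF a(3)] by linarith
    have "1 / (6 * real K) \<le> mu K N \<delta> \<tau>" by (rule mu_crude[OF Kge Nge delta(1) delta(2) a2 tl])
    hence m6: "1 / (6 * real K) \<le> \<mu> \<tau>" unfolding muE .
    have mp: "0 < \<mu> \<tau>" using mupos[OF a(1)] by blast
    have "0 < \<mu> \<tau> * (1 / (6 * real K))" using mp Kr by simp
    hence "1 / \<mu> \<tau> \<le> 1 / (1 / (6 * real K))" by (intro divide_left_mono[OF m6]) auto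
    hence i6: "1 / \<mu> \<tau> \<le> 6 * real K" by simp
    have tk: "100 * real K \<le> \<theta> * real K" using th100 Kr by (intro mult_right_mono) auto
    have we: "W \<tau> \<pi> = real K + (\<integral>z. invW K (\<mu> \<tau>) Pol (P \<tau>) \<pi> z \<partial>DX)"
      using W_eq[of \<tau> \<pi>] a(2) by simp
    have "(\<integral>z. invW K (\<mu> \<tau>) Pol (P \<tau>) \<pi> z \<partial>DX) \<le> 1 / \<mu> \<tau>" using intb[OF a(1), of \<pi>] by blast
    thus "W \<tau> \<pi> \<le> \<theta> * real K" unfolding we using i6 tk by linarith
  qed
  have pistarP: "pistar \<in> Pol" using pistar_max by blast
  have pitP: "\<And>s. pit s \<in> Pol" using pit_max by blast
  have tkK: "100 * real K \<le> \<theta> * real K" using th100 Kr by (intro mult_right_mono) auto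
  have dnn: "\<And>s \<pi>. \<pi> \<in> Pol \<Longrightarrow> 0 \<le> \<Delta> s (detW \<pi>)"
    unfolding \<Delta>_def using pit_max unfolding \<eta>_def by auto
  have mainb: "\<And>\<tau> \<pi>. \<pi> \<in> Pol \<Longrightarrow> 1 \<le> \<tau> \<Longrightarrow> t0 K N \<delta> < \<tau> \<Longrightarrow> t1 K N \<delta> \<le> \<tau> \<Longrightarrow>
      W \<tau> \<pi> \<le> real K + (1+\<epsilon>) * (max (4 * real K) (real (\<tau> - 1) * (\<Delta> (\<tau> - 1) (detW \<pi>))\<^sup>2 / (180 * C (\<tau> - 1))) + real K) + \<rho> * real K"
  proof -
    fix \<tau> \<pi> assume pP: "\<pi> \<in> Pol" and a: "1 \<le> (\<tau>::nat)" "t0 K N \<delta> < \<tau>" "t1 K N \<delta> \<le> \<tau>"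
    define E where "E = (\<lambda>\<sigma>. emp_avg x (\<tau> - 1) (invW K (\<mu> \<tau>) Pol (P \<tau>) \<sigma>))"
    have we: "W \<tau> \<pi> = real K + (\<integral>z. invW K (\<mu> \<tau>) Pol (P \<tau>) \<pi> z \<partial>DX)"
      using W_eq[of \<tau> \<pi>] a(2) by simp
    have c1: "(\<integral>z. invW K (\<mu> \<tau>) Pol (P \<tau>) \<pi> z \<partial>DX) \<le> (1 + \<epsilon>) * E \<pi> + \<rho> * real K"
      unfolding E_def using cond1_i pP a(3) by blast
    define Q0 where "Q0 = (\<lambda>\<sigma>::'x \<Rightarrow> 'a. if \<sigma> = \<pi> then (1::real) else 0)"
    have Qd: "is_dist Pol Q0" unfolding is_dist_def Q0_def using Pi_fin pP by (simp add: sum.delta)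
    have Qs: "(\<Sum>\<sigma>\<in>Pol. Q0 \<sigma> * E \<sigma>) = E \<pi>"
    proof -
      have "(\<Sum>\<sigma>\<in>Pol. Q0 \<sigma> * E \<sigma>) = (\<Sum>\<sigma>\<in>Pol. if \<sigma> = \<pi> then E \<sigma> else 0)"
        by (rule sum.cong) (auto simp: Q0_def)
      also have "\<dots> = E \<pi>" using Pi_fin pP by (simp add: sum.delta)
      finally show ?thesis .
    qed
    have Qw: "Wpol Pol Q0 = detW \<pi>"
    proof (intro ext)
      fix z b
      have "Wpol Pol Q0 z b = (\<Sum>\<sigma>\<in>{\<sigma>\<in>Pol. \<sigma> z = b}. if \<sigma> = \<pi> then 1 else 0)"
        unfolding Wpol_def Q0_def by simp
      also have "\<dots> = (if \<pi> \<in> {\<sigma>\<in>Pol. \<sigma> z = b} then 1 else 0)" using Pi_fin by (simp add: sum.delta)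
      also have "\<dots> = detW \<pi> z b" unfolding detW_def using pP by simp
      finally show "Wpol Pol Q0 z b = detW \<pi> z b" .
    qed
    have pc: "E \<pi> \<le> max (4 * real K) (real (\<tau> - 1) * (\<Delta> (\<tau> - 1) (detW \<pi>))\<^sup>2 / (180 * C (\<tau> - 1))) + real K"
    proof -
      have pc0: "(\<Sum>\<sigma>\<in>Pol. Q0 \<sigma> * E \<sigma>) \<le> max (4 * real K) (real (\<tau> - 1) * (\<Delta> (\<tau> - 1) (Wpol Pol Q0))\<^sup>2 / (180 * C (\<tau> - 1))) + real K"
        using P_constr a(1) Qd unfolding E_def by blast
      show ?thesis using pc0 unfolding Qs Qw .
    qed
    have "(1 + \<epsilon>) * E \<pi> \<le> (1 + \<epsilon>) * (max (4 * real K) (real (\<tau> - 1) * (\<Delta> (\<tau> - 1) (detW \<pi>))\<^sup>2 / (180 * C (\<tau> - 1))) + real K)"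
      using pc eps by (intro mult_left_mono) auto
    thus "W \<tau> \<pi> \<le> real K + (1+\<epsilon>) * (max (4 * real K) (real (\<tau> - 1) * (\<Delta> (\<tau> - 1) (detW \<pi>))\<^sup>2 / (180 * C (\<tau> - 1))) + real K) + \<rho> * real K"
      unfolding we using c1 by linarith
  qed
  have bigc: "\<And>\<tau>. t1 K N \<delta> \<le> \<tau> \<Longrightarrow> 1 \<le> \<tau> - 1 \<and> 1 \<le> ln (real N * real (\<tau> - 1) / \<delta>) \<and> 0 < C (\<tau> - 1) \<and> 0 < real (\<tau> - 1)"
  proof -
    fix \<tau> assume a: "t1 K N \<delta> \<le> (\<tau>::nat)"
    have "32 \<le> real \<tau>" using t1_ge[OF a] t1_big[OF Kge Nge delta] by linarith
    hence s3: "3 \<le> real (\<tau> - 1)" by linarith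
    have "real (\<tau> - 1) * 1 \<le> real (\<tau> - 1) * real N" using Nge by (intro mult_left_mono) auto
    also have "\<dots> \<le> real N * real (\<tau> - 1) / \<delta>"
    proof -
      have x0: "0 \<le> real N * real (\<tau> - 1)" by simp
      have "\<delta> * (real N * real (\<tau> - 1)) \<le> 1 * (real N * real (\<tau> - 1))" using delta x0 by (intro mult_right_mono) auto
      thus ?thesis using delta by (simp add: le_divide_eq mult.commute)
    qed
    finally have "3 \<le> real N * real (\<tau> - 1) / \<delta>" using s3 by linarith
    have lnm: "\<And>y::real. 3 \<le> y \<Longrightarrow> ln 3 \<le> ln y" by simp
    have "ln 3 \<le> ln (real N * real (\<tau> - 1) / \<delta>)" by (rule lnm) fact
    hence "1 \<le> ln (real N * real (\<tau> - 1) / \<delta>)" using ln3 by linarith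
    moreover have s1: "1 \<le> \<tau> - 1" using s3 by linarith
    moreover have "0 < C (\<tau> - 1)" by (rule Cpos[OF s1])
    moreover have "0 < real (\<tau> - 1)" using s1 by simp
    ultimately show "1 \<le> \<tau> - 1 \<and> 1 \<le> ln (real N * real (\<tau> - 1) / \<delta>) \<and> 0 < C (\<tau> - 1) \<and> 0 < real (\<tau> - 1)"
      by blast
  qed
  have cond2: "\<And>s \<pi> \<pi>'. \<pi> \<in> Pol \<Longrightarrow> \<pi>' \<in> Pol \<Longrightarrow> t0 K N \<delta> \<le> s \<Longrightarrow>
      \<eta> s (detW \<pi>) - \<eta> s (detW \<pi>') \<le> (etaD \<pi> - etaD \<pi>') + 2 * sqrt ((V s \<pi> + V s \<pi>') * C s / real s)"
  proof -
    fix s \<pi> \<pi>' assume h: "\<pi> \<in> Pol" "\<pi>' \<in> Pol" "t0 K N \<delta> \<le> s"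
    have "\<bar>(\<eta> s (detW \<pi>) - \<eta> s (detW \<pi>')) - (etaD \<pi> - etaD \<pi>')\<bar> \<le> 2 * sqrt ((V s \<pi> + V s \<pi>') * C s / real s)"
      using cond1_ii h by blast
    thus "\<eta> s (detW \<pi>) - \<eta> s (detW \<pi>') \<le> (etaD \<pi> - etaD \<pi>') + 2 * sqrt ((V s \<pi> + V s \<pi>') * C s / real s)"
      unfolding abs_le_iff by linarith
  qed
  have etaDs: "\<And>\<pi>. \<pi> \<in> Pol \<Longrightarrow> etaD \<pi> \<le> etaD pistar" using pistar_max by blast
  have etat: "\<And>s \<pi>. \<pi> \<in> Pol \<Longrightarrow> \<eta> s (detW \<pi>) \<le> \<eta> s (detW (pit s))" using pit_max by blast
  have DeltaE: "\<And>s \<pi>. \<Delta> s (detW \<pi>) = \<eta> s (detW (pit s)) - \<eta> s (detW \<pi>)" unfolding \<Delta>_def \<eta>_def by simp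
  have IND: "\<forall>n. 1 \<le> n \<longrightarrow> V n pistar \<le> \<theta> * real K \<and> V n (pit n) \<le> \<theta> * real K"
  proof (rule allI)
    fix n :: nat
    show "1 \<le> n \<longrightarrow> V n pistar \<le> \<theta> * real K \<and> V n (pit n) \<le> \<theta> * real K"
    proof (induction n rule: less_induct)
      case (less t)
      show ?case
      proof
        assume t1': "1 \<le> t"
        have IH: "\<And>s. 1 \<le> s \<Longrightarrow> s < t \<Longrightarrow> V s pistar \<le> \<theta> * real K \<and> V s (pit s) \<le> \<theta> * real K"
          using less.IH by blast
        have star: "\<And>\<tau>. \<tau> \<in> {1..t} \<Longrightarrow> W \<tau> pistar \<le> \<theta> * real K"
        proof -
          fix \<tau> assume \<tau>: "\<tau> \<in> {1..t}"
          consider (a) "\<tau> \<le> t0 K N \<delta>" | (b) "t0 K N \<delta> < \<tau>" "\<tau> < t1 K N \<delta>" | (c) "t0 K N \<delta> < \<tau>" "t1 K N \<delta> \<le> \<tau>"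
            by linarith
          then show "W \<tau> pistar \<le> \<theta> * real K"
          proof cases
            case a thus ?thesis using W_eq[of \<tau> pistar] thK by simp
          next
            case b thus ?thesis using crude \<tau> by auto
          next
            case c
            define s where "s = \<tau> - 1"
            have bs: "1 \<le> s" "0 < C s" "0 < real s" using bigc[OF c(2)] unfolding s_def by auto
            have st: "s < t" "t0 K N \<delta> \<le> s" using \<tau> c(1) bs unfolding s_def by auto
            have IHs: "V s pistar \<le> \<theta> * real K" "V s (pit s) \<le> \<theta> * real K" using IH[OF bs(1) st(1)] by auto
            have d0: "0 \<le> \<Delta> s (detW pistar)" using dnn[OF pistarP] .
            have "\<Delta> s (detW pistar) \<le> (etaD (pit s) - etaD pistar) + 2 * sqrt ((V s (pit s) + V s pistar) * C s / real s)"
              unfolding DeltaE using cond2[OF pitP pistarP st(2)] .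
            hence d1: "\<Delta> s (detW pistar) \<le> 2 * sqrt ((V s (pit s) + V s pistar) * C s / real s) + 2 * sqrt (0 * C s / real s)"
              using etaDs[OF pitP, of s] by simp
            have A0: "0 \<le> V s (pit s) + V s pistar" using Vnn[OF bs(1)] by (simp add: add_nonneg_nonneg)
            have "real s * (\<Delta> s (detW pistar))\<^sup>2 / (180 * C s) \<le> 2 * ((V s (pit s) + V s pistar) + 0) / 45"
              by (rule sq_bound2[OF d0 d1 A0 _ bs(2) bs(3)]) simp
            also have "\<dots> \<le> 4 * \<theta> * real K / 45" using IHs by simp
            finally have X: "real (\<tau> - 1) * (\<Delta> (\<tau> - 1) (detW pistar))\<^sup>2 / (180 * C (\<tau> - 1)) \<le> 4 * \<theta> * real K / 45"
              unfolding s_def .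
            have "W \<tau> pistar \<le> real K + (1+\<epsilon>) * (max (4 * real K) (real (\<tau> - 1) * (\<Delta> (\<tau> - 1) (detW pistar))\<^sup>2 / (180 * C (\<tau> - 1))) + real K) + \<rho> * real K"
              using mainb[OF pistarP _ c] \<tau> by auto
            also have "\<dots> \<le> \<theta> * real K"
              by (rule arith_star[OF eps(1) eps(2) rho0 th th100 _ X]) simp
            finally show ?thesis .
          qed
        qed
        have Vstar: "V t pistar \<le> \<theta> * real K" by (rule Vle[OF t1']) (rule star)
        define M where "M = V t (pit t)"
        have M0: "0 \<le> M" unfolding M_def using Vnn[OF t1'] .
        have pb: "\<And>\<tau>. \<tau> \<in> {1..t} \<Longrightarrow> W \<tau> (pit t) \<le> max (\<theta> * real K) (real K + (1+\<epsilon>) * (max (4 * real K) (4 * (\<theta> * real K + M) / 45) + real K) + \<rho> * real K)"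
        proof -
          fix \<tau> assume \<tau>: "\<tau> \<in> {1..t}"
          consider (a) "\<tau> \<le> t0 K N \<delta>" | (b) "t0 K N \<delta> < \<tau>" "\<tau> < t1 K N \<delta>" | (c) "t0 K N \<delta> < \<tau>" "t1 K N \<delta> \<le> \<tau>"
            by linarith
          then show "W \<tau> (pit t) \<le> max (\<theta> * real K) (real K + (1+\<epsilon>) * (max (4 * real K) (4 * (\<theta> * real K + M) / 45) + real K) + \<rho> * real K)"
          proof cases
            case a thus ?thesis using W_eq[of \<tau> "pit t"] thK by simp
          next
            case b thus ?thesis using crude[of \<tau> "pit t"] \<tau> by auto
          next
            case c
            define s where "s = \<tau> - 1"
            have bs: "1 \<le> s" "0 < C s" "0 < real s" "1 \<le> ln (real N * real s / \<delta>)" using bigc[OF c(2)] unfolding s_def by auto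
            have st: "s < t" "t0 K N \<delta> \<le> s" "s \<le> t" "t0 K N \<delta> \<le> t" using \<tau> c(1) bs unfolding s_def by auto
            have IHs: "V s (pit s) \<le> \<theta> * real K" using IH[OF bs(1) st(1)] by auto
            define A where "A = V t pistar + V t (pit t)"
            define B where "B = V s (pit s) + V s (pit t)"
            have A0: "0 \<le> A" unfolding A_def using Vnn[OF t1'] by (simp add: add_nonneg_nonneg)
            have B0: "0 \<le> B" unfolding B_def using Vnn[OF bs(1)] by (simp add: add_nonneg_nonneg)
            have d0: "0 \<le> \<Delta> s (detW (pit t))" using dnn[OF pitP] .
            have h1: "\<Delta> s (detW (pit t)) \<le> (etaD (pit s) - etaD (pit t)) + 2 * sqrt (B * C s / real s)"
              unfolding DeltaE B_def using cond2[OF pitP pitP st(2)] .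
            have h3a: "\<eta> t (detW pistar) - \<eta> t (detW (pit t)) \<le> 0" using etat[OF pistarP, of t] by simp
            have h3b: "\<bar>(\<eta> t (detW pistar) - \<eta> t (detW (pit t))) - (etaD pistar - etaD (pit t))\<bar> \<le> 2 * sqrt (A * C t / real t)"
              unfolding A_def using cond1_ii pistarP pitP st(4) by blast
            have h3: "etaD pistar - etaD (pit t) \<le> 2 * sqrt (A * C t / real t)" using h3a h3b by linarith
            have cm: "C t / real t \<le> C s / real s" unfolding CE by (rule Cc_mono[OF Nge delta(1) bs(1) st(3) bs(4)])
            have "A * (C t / real t) \<le> A * (C s / real s)" using cm A0 by (rule mult_left_mono)
            hence "sqrt (A * C t / real t) \<le> sqrt (A * C s / real s)" by simp
            hence d1: "\<Delta> s (detW (pit t)) \<le> 2 * sqrt (A * C s / real s) + 2 * sqrt (B * C s / real s)"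
              using h1 h3 etaDs[OF pitP, of s] by linarith
            have "real s * (\<Delta> s (detW (pit t)))\<^sup>2 / (180 * C s) \<le> 2 * (A + B) / 45"
              by (rule sq_bound2[OF d0 d1 A0 B0 bs(2) bs(3)])
            also have "\<dots> \<le> 4 * (\<theta> * real K + M) / 45"
            proof -
              have "A \<le> \<theta> * real K + M" unfolding A_def M_def using Vstar by simp
              moreover have "V s (pit t) \<le> M" unfolding M_def by (rule Vmono[OF bs(1) st(3)])
              hence "B \<le> \<theta> * real K + M" unfolding B_def using IHs by simp
              ultimately show ?thesis by simp
            qed
            finally have X: "real (\<tau> - 1) * (\<Delta> (\<tau> - 1) (detW (pit t)))\<^sup>2 / (180 * C (\<tau> - 1)) \<le> 4 * (\<theta> * real K + M) / 45"
              unfolding s_def .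
            have "W \<tau> (pit t) \<le> real K + (1+\<epsilon>) * (max (4 * real K) (real (\<tau> - 1) * (\<Delta> (\<tau> - 1) (detW (pit t)))\<^sup>2 / (180 * C (\<tau> - 1))) + real K) + \<rho> * real K"
              using mainb[OF pitP _ c] \<tau> by auto
            also have "\<dots> \<le> real K + (1+\<epsilon>) * (max (4 * real K) (4 * (\<theta> * real K + M) / 45) + real K) + \<rho> * real K"
            proof -
              have "max (4 * real K) (real (\<tau> - 1) * (\<Delta> (\<tau> - 1) (detW (pit t)))\<^sup>2 / (180 * C (\<tau> - 1))) + real K
                  \<le> max (4 * real K) (4 * (\<theta> * real K + M) / 45) + real K" using X by (simp add: max_def)
              thus ?thesis using eps by (simp add: mult_left_mono)
            qed
            finally show ?thesis by simp
          qed
        qed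
        have "M \<le> max (\<theta> * real K) (real K + (1+\<epsilon>) * (max (4 * real K) (4 * (\<theta> * real K + M) / 45) + real K) + \<rho> * real K)"
          unfolding M_def by (rule Vle[OF t1']) (rule pb[unfolded M_def])
        hence "M \<le> \<theta> * real K" using arith_pit[OF eps(1) eps(2) rho0 th th100, of "real K" M] by simp
        thus "V t pistar \<le> \<theta> * real K \<and> V t (pit t) \<le> \<theta> * real K" using Vstar M_def by simp
      qed
    qed
  qed
  show ?thesis using IND by blast
qed

end
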